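(* There is an absolute constant $c>0$ such that for all sufficiently large $k$, with $r=2^k\ln 2-\frac{1+\ln 2}{2}-\epsilon_k$, $\epsilon_k=\Theta_k(2^{-k/3})$ and $M=\lceil rN\rceil$, with probability $1-o(1)$ as $N\to\infty$ the following holds: for every set $A\subseteq L$ of literals with $|A|\ge 0.018N$, the set $\mathcal M$ of indices $i\in[M]$ such that at least $0.002k$ of the literals $\Phi_{i1},\dots,\Phi_{ik}$ lie in $A$ satisfies $|\mathcal M|\ge (1-\exp(-ck))M$.
   Context: $\Phi=\Phi_k(N,M)$ is the random $k$-CNF on $V=\{x_1,\dots,x_N\}$ with literal set $L=\{x_1,\neg x_1,\dots,x_N,\neg x_N\}$ and clauses $\Phi_i=\Phi_{i1}\vee\dots\vee\Phi_{ik}$ ($i\in[M]$), each $\Phi_{ij}$ independent and uniform in $L$. Literals in a clause are counted by position. *)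

theory Defs
  imports "HOL-Probability.Probability" "HOL-Library.Landau_Symbols"
begin

text \<open>Literals: (v, True) is x_v, (v, False) is its negation; variables are indexed by {..<N}.\<close>
type_synonym lit = "nat \<times> bool"

definition literals :: "nat \<Rightarrow> lit set" where
  "literals N = {..<N} \<times> UNIV"

text \<open>A k-CNF with M clauses: Phi i j is the j-th literal of clause i (i < M, j < k).\<close>
definition kcnfs :: "nat \<Rightarrow> nat \<Rightarrow> nat \<Rightarrow> (nat \<Rightarrow> nat \<Rightarrow> lit) set" where
  "kcnfs k N M = {..<M} \<rightarrow>\<^sub>E ({..<k} \<rightarrow>\<^sub>E literals N)"

text \<open>The random formula Phi_k(N,M): all literals independent and uniform in L.\<close>
definition random_kcnf :: "nat \<Rightarrow> nat \<Rightarrow> nat \<Rightarrow> (nat \<Rightarrow> nat \<Rightarrow> lit) pmf" where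
  "random_kcnf k N M = pmf_of_set (kcnfs k N M)"

text \<open>Number of positions j < k of clause i whose literal lies in A (counted by position).\<close>
definition hits :: "nat \<Rightarrow> (nat \<Rightarrow> nat \<Rightarrow> lit) \<Rightarrow> lit set \<Rightarrow> nat \<Rightarrow> nat" where
  "hits k Phi A i = card {j \<in> {..<k}. Phi i j \<in> A}"

definition density :: "(nat \<Rightarrow> real) \<Rightarrow> nat \<Rightarrow> real" where
  "density eps k = 2 ^ k * ln 2 - (1 + ln 2) / 2 - eps k"

definition num_clauses :: "(nat \<Rightarrow> real) \<Rightarrow> nat \<Rightarrow> nat \<Rightarrow> nat" where
  "num_clauses eps k N = nat \<lceil>density eps k * real N\<rceil>"

end

theory Submission imports Defs "HOL-Real_Asymp.Real_Asymp" begin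

lemma prod_if_pow:
  assumes "finite J"
  shows "(\<Prod>j\<in>J. if P j then (a::real) else 1) = a ^ card {j\<in>J. P j}"
  using assms by (simp add: prod.If_cases Int_def)

lemma sum_if_card:
  assumes "finite S"
  shows "(\<Sum>x\<in>S. if x \<in> B then (a::real) else 1) = a * card (S \<inter> B) + card (S - B)"
  using assms by (simp add: sum.If_cases Diff_eq)

lemma markov_card:
  fixes w :: "'a \<Rightarrow> real"
  assumes "finite X" "\<And>x. x \<in> X \<Longrightarrow> 0 \<le> w x" "\<And>x. x \<in> X \<Longrightarrow> P x \<Longrightarrow> v \<le> w x"
  shows "v * card {x\<in>X. P x} \<le> (\<Sum>x\<in>X. w x)"
proof -
  have "v * card {x\<in>X. P x} = (\<Sum>x\<in>{x\<in>X. P x}. v)" by simp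
  also have "\<dots> \<le> (\<Sum>x\<in>{x\<in>X. P x}. w x)" using assms by (intro sum_mono) auto
  also have "\<dots> \<le> (\<Sum>x\<in>X. w x)" using assms by (intro sum_mono2) auto
  finally show ?thesis .
qed

lemma exp2_ge5: "exp (2::real) \<ge> 5"
proof -
  have "exp (1/2::real) \<ge> 3/2" using exp_ge_add_one_self[of "1/2::real"] by simp
  have "exp (2::real) = exp (1/2) ^ 4" by (simp add: exp_of_nat_mult[symmetric])
  also have "\<dots> \<ge> (3/2) ^ 4" using \<open>exp (1/2::real) \<ge> 3/2\<close> by (intro power_mono) auto
  also have "(3/2::real)^4 = 81/16" by (simp add: eval_nat_numeral)
  finally show ?thesis by simp
qed

lemma ln2_ge: "ln (2::real) \<ge> 2/3"
proof -
  have "exp (1::real) < 272/100" by (rule e_less_272)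
  have "exp (2::real) = exp 1 ^ 2" by (simp add: exp_of_nat_mult[symmetric])
  also have "\<dots> \<le> (272/100)^2" using \<open>exp (1::real) < 272/100\<close> by (intro power_mono) auto
  also have "(272/100::real)^2 \<le> 8" by (simp add: power2_eq_square)
  finally have "exp (2::real) \<le> 8" .
  have "exp (2/3::real) ^ 3 = exp 2" by (simp add: exp_of_nat_mult[symmetric])
  hence "exp (2/3::real) ^ 3 \<le> 2 ^ 3" using \<open>exp 2 \<le> 8\<close> by simp
  hence "exp (2/3::real) \<le> 2" using power_le_imp_le_base[of "exp(2/3::real)" 2 2] by simp
  thus ?thesis by (metis exp_le_cancel_iff exp_ln zero_less_numeral)
qed

lemma ev3a: "\<forall>\<^sub>F k in at_top. (2::real) \<le> exp (2 * real k / 3) / 2 * real k * exp (- real k / 1000) / 1600"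
  by real_asymp
lemma two_pow_ge: "(2::real) ^ k \<ge> exp (2 * real k / 3)"
proof -
  have "(2::real) ^ k = exp (real k * ln 2)" using exp_of_nat_mult[of k "ln 2::real"] by simp
  moreover have "real k * ln 2 \<ge> real k * (2/3)" using ln2_ge by (intro mult_left_mono) auto
  ultimately show ?thesis by simp
qed

lemma clause_bound:
  fixes L A :: "'a set" and k :: nat
  assumes fin: "finite L" and AL: "A \<subseteq> L" and cA: "real (card A) \<ge> 0.009 * real (card L)"
  shows "real (card {c \<in> {..<k} \<rightarrow>\<^sub>E L. real (card {j\<in>{..<k}. c j \<in> A}) < 0.002 * real k})
          \<le> exp (- real k / 400) * real (card L) ^ k"
proof -
  define n where "n = real (card L)"
  define a where "a = real (card A)"
  define w where "w c = (\<Prod>j\<in>{..<k}. if c j \<in> A then exp (-2) else (1::real))" for c :: "nat \<Rightarrow> 'a"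
  have w_eq: "w c = exp (- 2 * real (card {j\<in>{..<k}. c j \<in> A}))" for c
    unfolding w_def by (simp add: prod_if_pow exp_of_nat_mult[symmetric] mult.commute)
  have "exp (- real k / 250) * card {c \<in> {..<k} \<rightarrow>\<^sub>E L. real (card {j\<in>{..<k}. c j \<in> A}) < 0.002 * real k}
        \<le> (\<Sum>c\<in>{..<k} \<rightarrow>\<^sub>E L. w c)"
  proof (rule markov_card)
    show "finite ({..<k} \<rightarrow>\<^sub>E L)" using fin by (simp add: finite_PiE)
    show "0 \<le> w c" for c by (simp add: w_eq)
    fix c assume "real (card {j\<in>{..<k}. c j \<in> A}) < 0.002 * real k"
    thus "exp (- real k / 250) \<le> w c" unfolding w_eq by simp
  qed
  also have "(\<Sum>c\<in>{..<k} \<rightarrow>\<^sub>E L. w c) = (\<Prod>j\<in>{..<k}. \<Sum>l\<in>L. if l \<in> A then exp (-2) else (1::real))"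
    unfolding w_def by (rule prod_sum_PiE[symmetric]) (use fin in auto)
  also have "\<dots> = (exp (-2) * a + (n - a)) ^ k"
    using fin AL by (simp add: sum_if_card Int_absorb1 card_Diff_subset finite_subset of_nat_diff card_mono a_def n_def)
  also have "\<dots> \<le> (n * exp (- 0.0072)) ^ k"
  proof (rule power_mono)
    have e2: "exp (-2::real) \<le> 1/5" using exp2_ge5 by (simp add: exp_minus field_simps)
    have a0: "a \<ge> 0" by (simp add: a_def)
    have "exp (-2) * a + (n - a) \<le> n - 0.8 * a" using e2 a0 mult_right_mono[OF e2 a0] by linarith
    also have "\<dots> \<le> n * (1 - 0.0072)" using cA unfolding a_def n_def by (simp add: field_simps)
    also have "\<dots> \<le> n * exp (- 0.0072)" using exp_ge_add_one_self[of "-0.0072::real"]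
      by (intro mult_left_mono) (auto simp: n_def)
    finally show "exp (-2) * a + (n - a) \<le> n * exp (- 0.0072)" .
    have "n \<ge> a" using card_mono[OF fin AL] by (simp add: a_def n_def)
    then show "0 \<le> exp (-2) * a + (n - a)" using a0 by simp
  qed
  also have "\<dots> = n ^ k * exp (- 0.0072 * real k)"
    by (simp add: power_mult_distrib exp_of_nat_mult[symmetric] mult.commute)
  finally have *: "exp (- real k / 250) * card {c \<in> {..<k} \<rightarrow>\<^sub>E L. real (card {j\<in>{..<k}. c j \<in> A}) < 0.002 * real k}
        \<le> n ^ k * exp (- 0.0072 * real k)" .
  have "real (card {c \<in> {..<k} \<rightarrow>\<^sub>E L. real (card {j\<in>{..<k}. c j \<in> A}) < 0.002 * real k})
       = exp (real k / 250) * (exp (- real k / 250) * card {c \<in> {..<k} \<rightarrow>\<^sub>E L. real (card {j\<in>{..<k}. c j \<in> A}) < 0.002 * real k})"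
    by (simp add: exp_minus field_simps)
  also have "\<dots> \<le> exp (real k / 250) * (n ^ k * exp (- 0.0072 * real k))"
    using * by (intro mult_left_mono) auto
  also have "\<dots> = n ^ k * exp (- 0.0032 * real k)"
    by (simp add: exp_add[symmetric] algebra_simps)
  also have "\<dots> \<le> n ^ k * exp (- real k / 400)"
    by (intro mult_left_mono) (auto simp: n_def)
  finally show ?thesis by (simp add: n_def mult.commute)
qed


lemma formula_bound:
  fixes C B :: "'b set" and M :: nat and q \<mu> T :: real
  assumes fin: "finite C" and BC: "B \<subseteq> C" and cB: "real (card B) \<le> q * real (card C)" and mu: "\<mu> \<ge> 0"
  shows "exp (\<mu> * T) * card {\<Phi> \<in> {..<M} \<rightarrow>\<^sub>E C. real (card {i\<in>{..<M}. \<Phi> i \<in> B}) > T}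
          \<le> real (card C) ^ M * exp (exp \<mu> * q * real M)"
proof -
  define n where "n = real (card C)"
  define b where "b = real (card B)"
  define w where "w \<Phi> = (\<Prod>i\<in>{..<M}. if \<Phi> i \<in> B then exp \<mu> else (1::real))" for \<Phi> :: "nat \<Rightarrow> 'b"
  have w_eq: "w \<Phi> = exp (\<mu> * real (card {i\<in>{..<M}. \<Phi> i \<in> B}))" for \<Phi>
    unfolding w_def by (simp add: prod_if_pow exp_of_nat_mult[symmetric] mult.commute)
  have "exp (\<mu> * T) * card {\<Phi> \<in> {..<M} \<rightarrow>\<^sub>E C. real (card {i\<in>{..<M}. \<Phi> i \<in> B}) > T}
        \<le> (\<Sum>\<Phi>\<in>{..<M} \<rightarrow>\<^sub>E C. w \<Phi>)"
  proof (rule markov_card)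
    show "finite ({..<M} \<rightarrow>\<^sub>E C)" using fin by (simp add: finite_PiE)
    show "0 \<le> w c" for c by (simp add: w_eq)
    fix c assume "real (card {i\<in>{..<M}. c i \<in> B}) > T"
    thus "exp (\<mu> * T) \<le> w c" unfolding w_eq using mu by (simp add: mult_left_mono)
  qed
  also have "(\<Sum>\<Phi>\<in>{..<M} \<rightarrow>\<^sub>E C. w \<Phi>) = (\<Prod>i\<in>{..<M}. \<Sum>l\<in>C. if l \<in> B then exp \<mu> else (1::real))"
    unfolding w_def by (rule prod_sum_PiE[symmetric]) (use fin in auto)
  also have "\<dots> = (exp \<mu> * b + (n - b)) ^ M"
    using fin BC by (simp add: sum_if_card Int_absorb1 card_Diff_subset finite_subset of_nat_diff card_mono b_def n_def)
  also have "\<dots> \<le> (n * exp (exp \<mu> * q)) ^ M"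
  proof (rule power_mono)
    have b0: "b \<ge> 0" by (simp add: b_def)
    have e1: "exp \<mu> - 1 \<ge> 0" using mu by simp
    have qn: "q * n \<ge> 0" using cB b0 by (simp add: b_def n_def)
    have "exp \<mu> * b + (n - b) = n + (exp \<mu> - 1) * b" by (simp add: algebra_simps)
    also have "\<dots> \<le> n + (exp \<mu> - 1) * (q * n)" using mult_left_mono[OF cB e1] by (simp add: b_def n_def)
    also have "\<dots> \<le> n + exp \<mu> * (q * n)" using qn by (simp add: algebra_simps)
    also have "\<dots> = n * (1 + exp \<mu> * q)" by (simp add: algebra_simps)
    also have "\<dots> \<le> n * exp (exp \<mu> * q)"
      by (intro mult_left_mono) (auto simp: n_def)
    finally show "exp \<mu> * b + (n - b) \<le> n * exp (exp \<mu> * q)" .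
    have "n \<ge> b" using card_mono[OF fin BC] by (simp add: b_def n_def)
    then show "0 \<le> exp \<mu> * b + (n - b)" using b0 by simp
  qed
  also have "\<dots> = n ^ M * exp (exp \<mu> * q * real M)"
    by (simp add: power_mult_distrib exp_of_nat_mult[symmetric] mult.commute)
  finally show ?thesis by (simp add: n_def)
qed


lemma ev3b: "\<forall>\<^sub>F k in at_top. (2::real) \<le> 2 ^ k / 2 * real k * exp (- real k / 1000) / 1600"
  using ev3a
proof eventually_elim
  case (elim k)
  have "exp (2 * real k / 3) / 2 * real k * exp (- real k / 1000) / 1600 \<le> 2 ^ k / 2 * real k * exp (- real k / 1000) / 1600"
    using two_pow_ge[of k] by (intro divide_right_mono mult_right_mono) auto
  with elim show ?case by linarith
qed

lemma card_literals: "card (literals N) = 2 * N"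
  by (simp add: literals_def card_cartesian_product)

lemma main_bound:
  fixes k N M :: nat
  assumes N1: "N \<ge> 1" and k1600: "k \<ge> 1600" and MN: "real M \<ge> 2 ^ k / 2 * real N"
    and big: "2 \<le> 2 ^ k / 2 * real k * exp (- real k / 1000) / (1600::real)"
  shows "measure_pmf.prob (pmf_of_set ({..<M} \<rightarrow>\<^sub>E ({..<k} \<rightarrow>\<^sub>E literals N)))
     {Phi. \<forall>A \<subseteq> literals N. real (card A) \<ge> 0.018 * real N \<longrightarrow>
        real (card {i \<in> {..<M}. real (hits k Phi A i) \<ge> 0.002 * real k})
          \<ge> (1 - exp (- (1/1000) * real k)) * real M} \<ge> 1 - (4 / exp 2) ^ N"
proof -
  define L where "L = literals N"
  define C where "C = {..<k} \<rightarrow>\<^sub>E L"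
  define \<Omega> where "\<Omega> = {..<M} \<rightarrow>\<^sub>E C"
  define S where "S = {Phi. \<forall>A \<subseteq> literals N. real (card A) \<ge> 0.018 * real N \<longrightarrow>
        real (card {i \<in> {..<M}. real (hits k Phi A i) \<ge> 0.002 * real k})
          \<ge> (1 - exp (- (1/1000) * real k)) * real M}"
  define e where "e = exp (- real k / 1000)"
  define BadA where "BadA A = {c \<in> C. real (card {j\<in>{..<k}. c j \<in> A}) < 0.002 * real k}" for A
  define E where "E A = {\<Phi> \<in> {..<M} \<rightarrow>\<^sub>E C. real (card {i\<in>{..<M}. \<Phi> i \<in> BadA A}) > e * real M}" for A
  define \<A> where "\<A> = {A. A \<subseteq> L \<and> real (card A) \<ge> 0.018 * real N}"
  have finL: "finite L" by (simp add: L_def literals_def)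
  have cardL: "card L = 2 * N" by (simp add: L_def card_literals)
  have Lne: "L \<noteq> {}" using cardL N1 by auto
  have finC: "finite C" using finL by (simp add: C_def finite_PiE)
  have finO: "finite \<Omega>" using finC by (simp add: \<Omega>_def finite_PiE)
  have Cne: "C \<noteq> {}" using Lne by (simp add: C_def PiE_eq_empty_iff)
  have One: "\<Omega> \<noteq> {}" using Cne by (simp add: \<Omega>_def PiE_eq_empty_iff)
  have cardO: "card \<Omega> = card C ^ M" by (simp add: \<Omega>_def card_PiE)
  have cO: "real (card \<Omega>) > 0" using finO One by (simp add: card_gt_0_iff)
  have cover: "\<Omega> - S \<subseteq> (\<Union>A\<in>\<A>. E A)"
  proof
    fix \<Phi> assume "\<Phi> \<in> \<Omega> - S"
    then have PO: "\<Phi> \<in> \<Omega>" and "\<Phi> \<notin> S" by auto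
    then obtain A where AL: "A \<subseteq> L" and cA: "real (card A) \<ge> 0.018 * real N"
      and ng: "real (card {i \<in> {..<M}. real (hits k \<Phi> A i) \<ge> 0.002 * real k}) < (1 - e) * real M"
      unfolding S_def e_def L_def by (auto simp: not_le)
    define G where "G = {i \<in> {..<M}. real (hits k \<Phi> A i) \<ge> 0.002 * real k}"
    define H where "H = {i\<in>{..<M}. \<Phi> i \<in> BadA A}"
    have PiC: "\<Phi> i \<in> C" if "i < M" for i using PO that by (auto simp: \<Omega>_def)
    have "H = {i \<in> {..<M}. \<not> real (hits k \<Phi> A i) \<ge> 0.002 * real k}"
      using PiC by (auto simp: H_def BadA_def hits_def not_le)
    then have "G \<union> H = {..<M}" "G \<inter> H = {}" by (auto simp: G_def)
    then have "card G + card H = M" by (metis card_Un_disjoint card_lessThan finite_Un finite_lessThan)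
    with ng have "real (card H) > e * real M" unfolding G_def by (simp add: algebra_simps)
    then have "\<Phi> \<in> E A" using PO unfolding E_def H_def \<Omega>_def by auto
    moreover have "A \<in> \<A>" using AL cA by (simp add: \<A>_def)
    ultimately show "\<Phi> \<in> (\<Union>A\<in>\<A>. E A)" by blast
  qed
  have APow: "\<A> \<subseteq> Pow L" by (auto simp: \<A>_def)
  have finA: "finite \<A>" using finL APow by (meson finite_Pow_iff finite_subset)
  have cardA: "card \<A> \<le> 2 ^ (2 * N)"
  proof -
    have "card \<A> \<le> card (Pow L)" using finL by (intro card_mono) (auto simp: \<A>_def)
    then show ?thesis using finL by (simp add: card_Pow cardL)
  qed
  have Ebound: "real (card (E A)) \<le> exp (- 2 * real N) * real (card \<Omega>)" if "A \<in> \<A>" for A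
  proof -
    have AL: "A \<subseteq> L" and cA: "real (card A) \<ge> 0.018 * real N" using that by (auto simp: \<A>_def)
    have "real (card (BadA A)) \<le> exp (- real k / 400) * real (card L) ^ k"
      unfolding BadA_def C_def
      by (rule clause_bound[OF finL AL]) (use cA in \<open>simp add: cardL\<close>)
    also have "real (card L) ^ k = real (card C)" by (simp add: C_def card_PiE)
    finally have cB: "real (card (BadA A)) \<le> exp (- real k / 400) * real (card C)" .
    have BC: "BadA A \<subseteq> C" by (auto simp: BadA_def)
    have fb: "exp (real k / 800 * (e * real M)) * real (card (E A))
          \<le> real (card C) ^ M * exp (exp (real k / 800) * exp (- real k / 400) * real M)"
      unfolding E_def by (rule formula_bound[OF finC BC cB]) simp
    have ee: "exp (real k / 800) * exp (- real k / 400) = exp (- real k / 800)"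
      by (simp add: exp_add[symmetric])
    have "exp (- real k / 800) \<le> e" unfolding e_def by simp
    also have "e \<le> e * (real k / 1600)" using k1600 by (simp add: e_def)
    finally have e8: "exp (- real k / 800) \<le> e * (real k / 1600)" .
    have "exp (- real k / 800) * real M - real k / 800 * (e * real M) \<le> e * (real k / 1600) * real M - real k / 800 * (e * real M)"
      using e8 by (intro diff_right_mono mult_right_mono) auto
    also have "\<dots> = - (real M * real k * e / 1600)" by (simp add: algebra_simps)
    also have "\<dots> \<le> - (2 ^ k / 2 * real N * real k * e / 1600)"
    proof -
      have "2 ^ k / 2 * real N * (real k * e / 1600) \<le> real M * (real k * e / 1600)"
        using MN by (intro mult_right_mono) (auto simp: e_def)
      then show ?thesis by (simp add: algebra_simps)
    qed
    also have "\<dots> = - real N * (2 ^ k / 2 * real k * exp (- real k / 1000) / 1600)"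
      by (simp add: e_def algebra_simps)
    also have "\<dots> \<le> - real N * 2" using big by (intro mult_left_mono_neg) auto
    finally have expo: "exp (- real k / 800) * real M - real k / 800 * (e * real M) \<le> - 2 * real N" by simp
    have aux: "\<And>a b (Y::real). exp (- a) * (Y * exp b) = Y * exp (b - a)"
      by (simp add: exp_diff exp_minus divide_inverse)
    have "real (card (E A)) = exp (- (real k / 800 * (e * real M))) * (exp (real k / 800 * (e * real M)) * real (card (E A)))"
      by (simp add: exp_minus field_simps)
    also have "\<dots> \<le> exp (- (real k / 800 * (e * real M))) * (real (card C) ^ M * exp (exp (- real k / 800) * real M))"
      using fb[unfolded ee] by (intro mult_left_mono) auto
    also have "\<dots> = real (card \<Omega>) * exp (exp (- real k / 800) * real M - real k / 800 * (e * real M))"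
      unfolding aux by (simp add: cardO)
    also have "\<dots> \<le> real (card \<Omega>) * exp (- 2 * real N)"
      using expo by (intro mult_left_mono) auto
    finally show ?thesis by (simp add: mult.commute)
  qed
  have "real (card (\<Omega> - S)) \<le> real (card (\<Union>A\<in>\<A>. E A))"
    using cover finA by (intro of_nat_mono card_mono) (auto simp: E_def \<Omega>_def[symmetric] intro!: finite_subset[OF _ finO])
  also have "\<dots> \<le> real (\<Sum>A\<in>\<A>. card (E A))"
    using card_UN_le[OF finA, of E] by (simp only: of_nat_le_iff)
  also have "\<dots> = (\<Sum>A\<in>\<A>. real (card (E A)))" by (rule of_nat_sum)
  also have "\<dots> \<le> (\<Sum>A\<in>\<A>. exp (- 2 * real N) * real (card \<Omega>))"
    by (intro sum_mono Ebound)
  also have "\<dots> = real (card \<A>) * exp (- 2 * real N) * real (card \<Omega>)" by simp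
  also have "\<dots> \<le> 2 ^ (2 * N) * exp (- 2 * real N) * real (card \<Omega>)"
    using cardA by (intro mult_right_mono) (auto simp flip: of_nat_power)
  also have "2 ^ (2 * N) * exp (- 2 * real N) = (4 / exp 2 :: real) ^ N"
  proof -
    have 1: "(2::real) ^ (2 * N) = 4 ^ N" by (simp add: power_mult)
    have 2: "exp (- 2 * real N) = exp (-2) ^ N" using exp_of_nat_mult[of N "-2::real"] by (simp add: mult.commute)
    show ?thesis unfolding 1 2 by (simp add: exp_minus divide_inverse power_mult_distrib)
  qed
  finally have bad: "real (card (\<Omega> - S)) \<le> (4 / exp 2) ^ N * real (card \<Omega>)" .
  have "card (\<Omega> \<inter> S) + card (\<Omega> - S) = card \<Omega>"
    using finO by (metis Int_Diff_disjoint Int_Diff_Un card_Un_disjoint finite_Diff finite_Int)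
  then have "real (card (\<Omega> \<inter> S)) / real (card \<Omega>) = 1 - real (card (\<Omega> - S)) / real (card \<Omega>)"
    using cO by (simp add: field_simps flip: of_nat_add)
  also have "\<dots> \<ge> 1 - (4 / exp 2) ^ N" using bad cO by (simp add: field_simps)
  finally have "real (card (\<Omega> \<inter> S)) / real (card \<Omega>) \<ge> 1 - (4 / exp 2) ^ N" .
  moreover have "measure_pmf.prob (pmf_of_set \<Omega>) S = real (card (\<Omega> \<inter> S)) / real (card \<Omega>)"
    using One finO by (rule measure_pmf_of_set)
  ultimately show ?thesis by (simp add: \<Omega>_def C_def L_def S_def)
qed


lemma pow_smallo: "(\<lambda>k::nat. 2 powr (- real k / 3)) \<in> o(\<lambda>_. 1)"
  by real_asymp

theorem mainTheorem10:
  shows "\<exists>c::real > 0. \<forall>eps :: nat \<Rightarrow> real.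
     eps \<in> \<Theta>(\<lambda>k. 2 powr (- real k / 3)) \<longrightarrow>
     (\<forall>\<^sub>F k in at_top.
        ((\<lambda>N. measure_pmf.prob (random_kcnf k N (num_clauses eps k N))
            {Phi. \<forall>A \<subseteq> literals N. real (card A) \<ge> 0.018 * real N \<longrightarrow>
               real (card {i \<in> {..<num_clauses eps k N}. real (hits k Phi A i) \<ge> 0.002 * real k})
                 \<ge> (1 - exp (- c * real k)) * real (num_clauses eps k N)})
         \<longlongrightarrow> 1) at_top)"
proof (intro exI[of _ "1/1000"] conjI allI impI)
  show "(0::real) < 1/1000" by simp
  fix eps :: "nat \<Rightarrow> real"
  assume th: "eps \<in> \<Theta>(\<lambda>k. 2 powr (- real k / 3))"
  have "eps \<in> o(\<lambda>_. 1)"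
    using landau_o.big_small_trans[OF bigthetaD1[OF th] pow_smallo] .
  then have ev1: "\<forall>\<^sub>F k in at_top. norm (eps k) \<le> 1 * norm (1::real)"
    by (rule landau_o.smallD) simp
  have ev2: "\<forall>\<^sub>F k in at_top. (1600::nat) \<le> k" by (rule eventually_ge_at_top)
  show "\<forall>\<^sub>F k in at_top.
        ((\<lambda>N. measure_pmf.prob (random_kcnf k N (num_clauses eps k N))
            {Phi. \<forall>A \<subseteq> literals N. real (card A) \<ge> 0.018 * real N \<longrightarrow>
               real (card {i \<in> {..<num_clauses eps k N}. real (hits k Phi A i) \<ge> 0.002 * real k})
                 \<ge> (1 - exp (- (1/1000) * real k)) * real (num_clauses eps k N)})
         \<longlongrightarrow> 1) at_top"
    using ev1 ev2 ev3b
  proof eventually_elim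
    case (elim k)
    have ek: "eps k \<le> 1" using elim(1) by simp
    have k4: "(2::real) ^ k \<ge> 16" using power_increasing[of 4 k "2::real"] elim(2) by simp
    have ln2le: "ln (2::real) \<le> 1" using ln_le_minus_one[of 2] by simp
    have dens: "density eps k \<ge> 2 ^ k / 2"
    proof -
      have h: "2 ^ k * (2/3) \<le> (2::real) ^ k * ln 2" using ln2_ge by (intro mult_left_mono) auto
      have g: "x/2 \<le> y - (1+l)/2 - e" if "x*(2/3) \<le> y" "e \<le> 1" "l \<le> 1" "16 \<le> x" for x y l e :: real
        using that by (simp add: field_simps)
      show ?thesis unfolding density_def by (rule g[OF h ek ln2le k4])
    qed
    define P where "P N = measure_pmf.prob (random_kcnf k N (num_clauses eps k N))
            {Phi. \<forall>A \<subseteq> literals N. real (card A) \<ge> 0.018 * real N \<longrightarrow>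
               real (card {i \<in> {..<num_clauses eps k N}. real (hits k Phi A i) \<ge> 0.002 * real k})
                 \<ge> (1 - exp (- (1/1000) * real k)) * real (num_clauses eps k N)}" for N
    have low: "\<forall>\<^sub>F N in at_top. 1 - (4 / exp 2) ^ N \<le> P N"
      using eventually_ge_at_top[of "1::nat"]
    proof eventually_elim
      case (elim N)
      have "real (num_clauses eps k N) \<ge> density eps k * real N"
        unfolding num_clauses_def by linarith
      moreover have "density eps k * real N \<ge> 2 ^ k / 2 * real N"
        using dens by (intro mult_right_mono) auto
      ultimately have MN: "real (num_clauses eps k N) \<ge> 2 ^ k / 2 * real N" by linarith
      show ?case unfolding P_def random_kcnf_def kcnfs_def
        by (rule main_bound[OF elim \<open>1600 \<le> k\<close> MN \<open>2 \<le> _\<close>])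
    qed
    have up: "\<forall>\<^sub>F N in at_top. P N \<le> 1" unfolding P_def by simp
    have e2: "exp (2::real) > 4" using exp2_ge5 by simp
    have lim0: "(\<lambda>N. (4 / exp 2 :: real) ^ N) \<longlonglongrightarrow> 0"
      by (rule LIMSEQ_power_zero) (use e2 in simp)
    have lim1: "(\<lambda>N. 1 - (4 / exp 2 :: real) ^ N) \<longlonglongrightarrow> 1"
      using tendsto_diff[OF tendsto_const[of "1::real"] lim0] by simp
    have "P \<longlonglongrightarrow> 1"
      by (rule tendsto_sandwich[OF low up lim1 tendsto_const])
    then show ?case unfolding P_def .
  qed
qed

end
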